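(* Let $K : \mathbb{B}^n \times \mathbb{B}^r \to \mathbb{B}$ and let $f_1, \ldots, f_r : \mathbb{B}^n \to \mathbb{B}$ be such that for all $i \in \{1,\dots,r\}$ and all $\mathbf{x}\in\mathbb B^n$, $$f_i(\mathbf{x}) = \exists u_{i+1},\ldots,u_r\; K(\mathbf{x}, f_1(\mathbf{x}), \ldots, f_{i-1}(\mathbf{x}), 1, u_{i+1}, \ldots, u_r).$$ Then for every $\mathbf{x} \in \mathrm{Dom}(K)$ we have $K(\mathbf{x}, f_1(\mathbf{x}), \ldots, f_r(\mathbf{x})) = 1$.
   Context: $\mathbb{B}=\{0,1\}$. For a boolean function $g$, $\exists y\, g$ denotes $g|_{y=0}+g|_{y=1}$ (logical OR of the two restrictions), extended to several variables by iteration. $\mathrm{Dom}(K) = \{\mathbf x \in \mathbb B^n \mid \exists \mathbf u\in\mathbb B^r\; K(\mathbf x,\mathbf u)=1\}$. *)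

theory Defs
  imports Main
begin

text \<open>Boolean vectors in B^m are represented as bool lists of length m.
  A boolean function K : B^n x B^r -> B is a curried function on lists
  (only its values on lists of the right lengths matter).\<close>

definition Dom :: "nat \<Rightarrow> (bool list \<Rightarrow> bool list \<Rightarrow> bool) \<Rightarrow> bool list set" where
  "Dom r K = {x. \<exists>u. length u = r \<and> K x u}"

end

theory Submission
  imports Defs
begin

theorem lemma1:
  fixes n r :: nat
    and K :: "bool list \<Rightarrow> bool list \<Rightarrow> bool"
    and f :: "nat \<Rightarrow> bool list \<Rightarrow> bool"
  assumes hf: "\<And>i x. i \<in> {1..r} \<Longrightarrow> length x = n \<Longrightarrow>
      f i x = (\<exists>v. length v = r - i \<and> K x (map (\<lambda>j. f j x) [1..<i] @ [True] @ v))"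
  shows "\<forall>x. length x = n \<longrightarrow> x \<in> Dom r K \<longrightarrow> K x (map (\<lambda>j. f j x) [1..<r+1])"
proof (intro allI impI)
  fix x assume lx: "length x = n" and d: "x \<in> Dom r K"
  have P: "i \<le> r \<Longrightarrow> \<exists>v. length v = r - i \<and> K x (map (\<lambda>j. f j x) [1..<i+1] @ v)" for i
  proof (induction i)
    case 0
    then show ?case using d by (simp add: Dom_def)
  next
    case (Suc i)
    then obtain v where v: "length v = r - i" "K x (map (\<lambda>j. f j x) [1..<i+1] @ v)" by auto
    from Suc.prems v(1) obtain b v' where bv: "v = b # v'" by (cases v) auto
    have len: "length v' = r - Suc i" using v(1) bv by simp
    have hi: "Suc i \<in> {1..r}" using Suc.prems by simp
    have eq: "f (Suc i) x = (\<exists>w. length w = r - Suc i \<and> K x (map (\<lambda>j. f j x) [1..<i+1] @ [True] @ w))"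
      using hf[OF hi lx] by simp
    have split: "map (\<lambda>j. f j x) [1..<Suc i+1] = map (\<lambda>j. f j x) [1..<i+1] @ [f (Suc i) x]"
      by simp
    show ?case
    proof (cases "f (Suc i) x")
      case True
      then obtain w where "length w = r - Suc i" "K x (map (\<lambda>j. f j x) [1..<i+1] @ [True] @ w)"
        using eq by blast
      then show ?thesis using True split by (intro exI[of _ w]) simp
    next
      case False
      have "b = False"
      proof (rule ccontr)
        assume "b \<noteq> False"
        then have "b" by simp
        then have "f (Suc i) x" using eq len v(2) bv by auto
        then show False using False by simp
      qed
      then show ?thesis using False split v(2) bv len by (intro exI[of _ v']) simp
    qed
  qed
  from P[of r] show "K x (map (\<lambda>j. f j x) [1..<r+1])" by auto
qed

end
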